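(* For every tree $T$ of order $n\ge 2$ that is not isomorphic to the star $K_{1,n-1}$, $\gamma_{rdR}(T)\ge n+2$.
   Context: All graphs are finite and simple. An RDRD function of $G$ is a function $f:V(G)\to\{0,1,2,3\}$ such that every vertex with value $0$ has at least two neighbors with value $2$ or at least one neighbor with value $3$, every vertex with value $1$ has a neighbor with value $2$ or $3$, and the subgraph induced by the vertices with value $0$ has no isolated vertices; $\gamma_{rdR}(G)$ is the minimum of $\sum_v f(v)$ over RDRD functions. *)

theory Defs
  imports Main
begin

definition simple_graph :: "'a set \<Rightarrow> ('a \<Rightarrow> 'a \<Rightarrow> bool) \<Rightarrow> bool" where
  "simple_graph V E \<longleftrightarrow> finite V \<and> (\<forall>u v. E u v \<longrightarrow> u \<in> V \<and> v \<in> V)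
     \<and> (\<forall>u v. E u v \<longrightarrow> E v u) \<and> (\<forall>v. \<not> E v v)"

definition connected_graph :: "'a set \<Rightarrow> ('a \<Rightarrow> 'a \<Rightarrow> bool) \<Rightarrow> bool" where
  "connected_graph V E \<longleftrightarrow> (\<forall>u\<in>V. \<forall>v\<in>V. E\<^sup>*\<^sup>* u v)"

definition is_cycle :: "'a set \<Rightarrow> ('a \<Rightarrow> 'a \<Rightarrow> bool) \<Rightarrow> 'a list \<Rightarrow> bool" where
  "is_cycle V E xs \<longleftrightarrow> length xs \<ge> 3 \<and> distinct xs \<and> set xs \<subseteq> V
     \<and> (\<forall>i. Suc i < length xs \<longrightarrow> E (xs ! i) (xs ! Suc i)) \<and> E (last xs) (hd xs)"

definition acyclic_graph :: "'a set \<Rightarrow> ('a \<Rightarrow> 'a \<Rightarrow> bool) \<Rightarrow> bool" where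
  "acyclic_graph V E \<longleftrightarrow> \<not> (\<exists>xs. is_cycle V E xs)"

definition is_tree :: "'a set \<Rightarrow> ('a \<Rightarrow> 'a \<Rightarrow> bool) \<Rightarrow> bool" where
  "is_tree V E \<longleftrightarrow> simple_graph V E \<and> V \<noteq> {} \<and> connected_graph V E \<and> acyclic_graph V E"

definition star_edges :: "nat \<Rightarrow> nat \<Rightarrow> bool" where
  "star_edges i j \<longleftrightarrow> i \<noteq> j \<and> (i = 0 \<or> j = 0)"

definition graph_iso :: "'a set \<Rightarrow> ('a \<Rightarrow> 'a \<Rightarrow> bool) \<Rightarrow> 'b set \<Rightarrow> ('b \<Rightarrow> 'b \<Rightarrow> bool) \<Rightarrow> bool" where
  "graph_iso V E W F \<longleftrightarrow> (\<exists>f. bij_betw f V W \<and> (\<forall>u\<in>V. \<forall>v\<in>V. E u v \<longleftrightarrow> F (f u) (f v)))"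

definition is_star :: "'a set \<Rightarrow> ('a \<Rightarrow> 'a \<Rightarrow> bool) \<Rightarrow> nat \<Rightarrow> bool" where
  "is_star V E n \<longleftrightarrow> graph_iso V E {0..<n} star_edges"

definition rdrd_fun :: "'a set \<Rightarrow> ('a \<Rightarrow> 'a \<Rightarrow> bool) \<Rightarrow> ('a \<Rightarrow> nat) \<Rightarrow> bool" where
  "rdrd_fun V E f \<longleftrightarrow> (\<forall>v\<in>V. f v \<le> 3)
     \<and> (\<forall>v\<in>V. f v = 0 \<longrightarrow> card {w. E v w \<and> f w = 2} \<ge> 2 \<or> (\<exists>w. E v w \<and> f w = 3))
     \<and> (\<forall>v\<in>V. f v = 1 \<longrightarrow> (\<exists>w. E v w \<and> (f w = 2 \<or> f w = 3)))
     \<and> (\<forall>v\<in>V. f v = 0 \<longrightarrow> (\<exists>w. E v w \<and> f w = 0))"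

definition weight :: "'a set \<Rightarrow> ('a \<Rightarrow> nat) \<Rightarrow> nat" where
  "weight V f = (\<Sum>v\<in>V. f v)"

definition gamma_rdR :: "'a set \<Rightarrow> ('a \<Rightarrow> 'a \<Rightarrow> bool) \<Rightarrow> nat" where
  "gamma_rdR V E = Min {weight V f | f. rdrd_fun V E f}"

end

theory Submission
  imports Defs
begin

definition is_path :: "'a set \<Rightarrow> ('a \<Rightarrow> 'a \<Rightarrow> bool) \<Rightarrow> 'a list \<Rightarrow> bool" where
  "is_path V E xs \<longleftrightarrow> distinct xs \<and> set xs \<subseteq> V \<and> (\<forall>i. Suc i < length xs \<longrightarrow> E (xs ! i) (xs ! Suc i))"

lemma path_rev:
  assumes "is_path V E xs" "\<forall>u v. E u v \<longrightarrow> E v u"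
  shows "is_path V E (rev xs)"
  unfolding is_path_def
proof (intro conjI allI impI)
  show "distinct (rev xs)" "set (rev xs) \<subseteq> V" using assms unfolding is_path_def by auto
  fix i assume i: "Suc i < length (rev xs)"
  let ?L = "length xs"
  have "E (xs ! (?L - Suc (Suc i))) (xs ! Suc (?L - Suc (Suc i)))"
    using assms(1) i unfolding is_path_def by auto
  moreover have "Suc (?L - Suc (Suc i)) = ?L - Suc i" using i by simp
  ultimately have "E (xs ! (?L - Suc (Suc i))) (xs ! (?L - Suc i))" by simp
  then have "E (xs ! (?L - Suc i)) (xs ! (?L - Suc (Suc i)))" using assms(2) by blast
  moreover have "rev xs ! i = xs ! (?L - Suc i)" using i by (simp add: rev_nth)
  moreover have "rev xs ! Suc i = xs ! (?L - Suc (Suc i))" using i by (simp add: rev_nth)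
  ultimately show "E (rev xs ! i) (rev xs ! Suc i)" by simp
qed

lemma max_path_hd_leaf:
  assumes sg: "simple_graph V E" and ac: "acyclic_graph V E"
    and p: "is_path V E xs" and len: "length xs \<ge> 2"
    and max: "\<And>ys. is_path V E ys \<Longrightarrow> length ys \<le> length xs"
    and e: "E (hd xs) w"
  shows "w = xs ! 1"
proof -
  have wV: "w \<in> V" using sg e unfolding simple_graph_def by blast
  have hd0: "hd xs = xs ! 0" using len by (cases xs) auto
  have "w \<in> set xs"
  proof (rule ccontr)
    assume nw: "w \<notin> set xs"
    have "is_path V E (w # xs)"
      unfolding is_path_def
    proof (intro conjI allI impI)
      show "distinct (w # xs)" "set (w # xs) \<subseteq> V" using p nw wV unfolding is_path_def by auto
      fix i assume i: "Suc i < length (w # xs)"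
      show "E ((w # xs) ! i) ((w # xs) ! Suc i)"
      proof (cases i)
        case 0 then show ?thesis using e hd0 sg unfolding simple_graph_def by auto
      next
        case (Suc j) then show ?thesis using p i unfolding is_path_def by auto
      qed
    qed
    from max[OF this] show False by simp
  qed
  then obtain i where i: "i < length xs" "xs ! i = w" by (auto simp: in_set_conv_nth)
  have i0: "i \<noteq> 0"
  proof
    assume "i = 0" then show False using i e sg hd0 unfolding simple_graph_def by auto
  qed
  have "\<not> i \<ge> 2"
  proof
    assume i2: "i \<ge> 2"
    let ?c = "take (Suc i) xs"
    have "is_cycle V E ?c"
      unfolding is_cycle_def
    proof (intro conjI allI impI)
      show "3 \<le> length ?c" using i i2 by simp
      show "distinct ?c" using p unfolding is_path_def by simp
      show "set ?c \<subseteq> V" using p unfolding is_path_def by (meson order_trans set_take_subset)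
      fix j assume j: "Suc j < length ?c"
      then show "E (?c ! j) (?c ! Suc j)" using p i unfolding is_path_def by auto
    next
      have "last ?c = xs ! i" using i(1) by (simp add: take_Suc_conv_app_nth)
      moreover have "hd ?c = hd xs" using i by simp
      ultimately show "E (last ?c) (hd ?c)" using e i sg unfolding simple_graph_def by auto
    qed
    then show False using ac unfolding acyclic_graph_def by blast
  qed
  then show ?thesis using i i0 by (metis One_nat_def less_2_cases not_le)
qed

lemma tree_leaf:
  assumes t: "is_tree V E" and c: "card V \<ge> 2" and r: "r \<in> V"
  shows "\<exists>l u. l \<in> V \<and> l \<noteq> r \<and> E l u \<and> (\<forall>w. E l w \<longrightarrow> w = u)"
proof -
  have sg: "simple_graph V E" and ac: "acyclic_graph V E" and cn: "connected_graph V E"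
    using t unfolding is_tree_def by auto
  have fin: "finite V" using sg unfolding simple_graph_def by auto
  obtain a b where ab: "a \<in> V" "b \<in> V" "a \<noteq> b"
  proof -
    have "\<not> card V \<le> Suc 0" using c by simp
    then show ?thesis using card_le_Suc0_iff_eq[OF fin] that by blast
  qed
  have "E\<^sup>*\<^sup>* a b" using cn ab unfolding connected_graph_def by auto
  then obtain c where ac1: "E a c" using ab(3) by (metis converse_rtranclpE)
  have cV: "c \<in> V" using sg ac1 unfolding simple_graph_def by auto
  have "a \<noteq> c" using sg ac1 unfolding simple_graph_def by auto
  then have p0: "is_path V E [a, c]" using ab cV ac1 unfolding is_path_def
    by (auto simp: less_Suc_eq)
  have bnd: "\<forall>k. (\<exists>xs. is_path V E xs \<and> length xs = k) \<longrightarrow> k \<le> card V"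
  proof (intro allI impI)
    fix k assume "\<exists>xs. is_path V E xs \<and> length xs = k"
    then obtain xs where "is_path V E xs" "length xs = k" by blast
    then have d: "distinct xs" and sx: "set xs \<subseteq> V" unfolding is_path_def by auto
    have "card (set xs) \<le> card V" by (rule card_mono[OF fin sx])
    then show "k \<le> card V" using distinct_card[OF d] \<open>length xs = k\<close> by simp
  qed
  obtain k where k: "\<exists>xs. is_path V E xs \<and> length xs = k"
      "\<forall>y. (\<exists>xs. is_path V E xs \<and> length xs = y) \<longrightarrow> y \<le> k"
  proof -
    have p0': "\<exists>xs. is_path V E xs \<and> length xs = 2" using p0 by (intro exI[of _ "[a,c]"]) simp
    show ?thesis using Nat.ex_has_greatest_nat[of "\<lambda>k. \<exists>xs. is_path V E xs \<and> length xs = k" 2, OF p0' bnd] that by blast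
  qed
  then obtain xs where xs: "is_path V E xs" "length xs = k" by blast
  have max: "\<And>ys. is_path V E ys \<Longrightarrow> length ys \<le> length xs"
  proof -
    fix ys assume "is_path V E ys"
    then have "\<exists>zs. is_path V E zs \<and> length zs = length ys" by blast
    then show "length ys \<le> length xs" using k(2) xs(2) by simp
  qed
  have len: "length xs \<ge> 2" using max[OF p0] by simp
  have sym: "\<forall>u v. E u v \<longrightarrow> E v u" using sg unfolding simple_graph_def by auto
  have rxs: "is_path V E (rev xs)" using path_rev[OF xs(1) sym] .
  have lenr: "length (rev xs) \<ge> 2" using len by simp
  have maxr: "\<And>ys. is_path V E ys \<Longrightarrow> length ys \<le> length (rev xs)" using max by simp
  have l1: "\<forall>w. E (hd xs) w \<longrightarrow> w = xs ! 1"
    using max_path_hd_leaf[OF sg ac xs(1) len max] by blast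
  have l2: "\<forall>w. E (hd (rev xs)) w \<longrightarrow> w = rev xs ! 1"
    using max_path_hd_leaf[OF sg ac rxs lenr maxr] by blast
  have nn: "xs \<noteq> []" using len by auto
  have "E (xs ! 0) (xs ! Suc 0)" using xs(1) len unfolding is_path_def by auto
  then have e1: "E (hd xs) (xs ! 1)" using nn by (simp add: hd_conv_nth)
  have "E (rev xs ! 0) (rev xs ! Suc 0)" using rxs lenr unfolding is_path_def by auto
  then have e2: "E (hd (rev xs)) (rev xs ! 1)" using nn by (simp add: hd_conv_nth)
  have sub: "set xs \<subseteq> V" using xs(1) unfolding is_path_def by auto
  have hV: "hd xs \<in> V" "hd (rev xs) \<in> V" using nn sub hd_in_set[of xs] hd_in_set[of "rev xs"] by auto
  have ne: "hd xs \<noteq> hd (rev xs)"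
  proof -
    have "hd (rev xs) = xs ! (length xs - 1)" using nn by (simp add: hd_rev last_conv_nth)
    moreover have "hd xs = xs ! 0" using nn by (simp add: hd_conv_nth)
    moreover have "distinct xs" using xs(1) unfolding is_path_def by simp
    moreover have "xs ! 0 \<noteq> xs ! (length xs - 1)"
      using nth_eq_iff_index_eq[OF \<open>distinct xs\<close>, of 0 "length xs - 1"] len nn by simp
    ultimately show ?thesis by simp
  qed
  show ?thesis
  proof (cases "hd xs = r")
    case True
    then have "hd (rev xs) \<noteq> r" using ne by simp
    then show ?thesis using hV l2 e2 by blast
  next
    case False
    then show ?thesis using hV l1 e1 by blast
  qed
qed

lemma tree_remove_leaf:
  assumes t: "is_tree V E" and l: "l \<in> V" "E l u" "\<forall>w. E l w \<longrightarrow> w = u" and c: "card V \<ge> 2"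
  shows "is_tree (V - {l}) (\<lambda>a b. E a b \<and> a \<noteq> l \<and> b \<noteq> l)"
proof -
  let ?E = "\<lambda>a b. E a b \<and> a \<noteq> l \<and> b \<noteq> l"
  have sg: "simple_graph V E" and ac: "acyclic_graph V E" and cn: "connected_graph V E"
    using t unfolding is_tree_def by auto
  have fin: "finite V" using sg unfolding simple_graph_def by auto
  have inV: "\<And>a b. E a b \<Longrightarrow> a \<in> V \<and> b \<in> V" and sym: "\<And>a b. E a b \<Longrightarrow> E b a"
    and irr: "\<And>a. \<not> E a a" using sg unfolding simple_graph_def by blast+
  have ul: "u \<noteq> l" using irr l(2) by metis
  have s1: "finite (V - {l})" using fin by simp
  have s2: "\<forall>a b. ?E a b \<longrightarrow> a \<in> V - {l} \<and> b \<in> V - {l}"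
  proof (intro allI impI)
    fix a b assume e: "?E a b"
    then show "a \<in> V - {l} \<and> b \<in> V - {l}" using inV[of a b] by simp
  qed
  have s3: "\<forall>a b. ?E a b \<longrightarrow> ?E b a"
  proof (intro allI impI)
    fix a b assume e: "?E a b"
    then show "?E b a" using sym[of a b] by simp
  qed
  have s4: "\<forall>a. \<not> ?E a a" using irr by simp
  have sg': "simple_graph (V - {l}) ?E" unfolding simple_graph_def using s1 s2 s3 s4 by blast
  have ne: "V - {l} \<noteq> {}"
  proof
    assume "V - {l} = {}"
    then have "V \<subseteq> {l}" by auto
    then have "card V \<le> 1" using card_mono[of "{l}" V] by simp
    then show False using c by simp
  qed
  have ac': "acyclic_graph (V - {l}) ?E"
  proof -
    have "is_cycle V E xs" if "is_cycle (V - {l}) ?E xs" for xs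
      using that unfolding is_cycle_def by auto
    then show ?thesis using ac unfolding acyclic_graph_def by blast
  qed
  have key: "E\<^sup>*\<^sup>* a b \<Longrightarrow> a \<noteq> l \<Longrightarrow> (?E\<^sup>*\<^sup>* a b \<and> b \<noteq> l) \<or> (b = l \<and> ?E\<^sup>*\<^sup>* a u)" for a b
  proof (induction rule: rtranclp_induct)
    case base then show ?case by simp
  next
    case (step y z)
    show ?case
    proof (cases "?E\<^sup>*\<^sup>* a y \<and> y \<noteq> l")
      case True
      show ?thesis
      proof (cases "z = l")
        case zl: True
        then have "E l y" using step(2) sym by simp
        then have "y = u" using l(3) by blast
        then show ?thesis using True zl by simp
      next
        case False
        have yz: "?E y z" using step(2) True False by simp
        have ay: "?E\<^sup>*\<^sup>* a y" using True by simp
        have "?E\<^sup>*\<^sup>* a z" using ay yz by (rule rtranclp.rtrancl_into_rtrancl)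
        then show ?thesis using False by simp
      qed
    next
      case False
      then have yl: "y = l" and au: "?E\<^sup>*\<^sup>* a u" using step(3) step.prems by blast+
      have "E l z" using step(2) yl by simp
      then have "z = u" using l(3) by blast
      then show ?thesis using \<open>?E\<^sup>*\<^sup>* a u\<close> ul by simp
    qed
  qed
  have cn': "connected_graph (V - {l}) ?E"
    unfolding connected_graph_def
  proof (intro ballI)
    fix a b assume "a \<in> V - {l}" "b \<in> V - {l}"
    moreover have "E\<^sup>*\<^sup>* a b" using cn \<open>a \<in> V - {l}\<close> \<open>b \<in> V - {l}\<close>
      unfolding connected_graph_def by blast
    ultimately show "?E\<^sup>*\<^sup>* a b" using key[of a b] by blast
  qed
  show ?thesis using sg' ne ac' cn' unfolding is_tree_def by blast
qed

lemma tree_root: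
  "is_tree V E \<Longrightarrow> r \<in> V \<Longrightarrow> \<exists>p. \<forall>u v. E u v \<longrightarrow> (v \<noteq> r \<and> u = p v) \<or> (u \<noteq> r \<and> v = p u)"
proof (induction "card V" arbitrary: V E rule: less_induct)
  case less
  have sg: "simple_graph V E" using less.prems unfolding is_tree_def by auto
  have fin: "finite V" using sg unfolding simple_graph_def by auto
  show ?case
  proof (cases "card V \<ge> 2")
    case False
    then have "card V \<le> 1" by simp
    then have "\<forall>a\<in>V. \<forall>b\<in>V. a = b" using card_le_Suc0_iff_eq[OF fin] by simp
    then have "V = {r}" using less.prems(2) by blast
    then have "\<forall>u v. \<not> E u v" using sg unfolding simple_graph_def by blast
    then show ?thesis by blast
  next
    case True
    obtain l u where lu: "l \<in> V" "l \<noteq> r" "E l u" "\<forall>w. E l w \<longrightarrow> w = u"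
      using tree_leaf[OF less.prems(1) True less.prems(2)] by blast
    let ?E = "\<lambda>a b. E a b \<and> a \<noteq> l \<and> b \<noteq> l"
    have t': "is_tree (V - {l}) ?E" using tree_remove_leaf[OF less.prems(1) lu(1) lu(3) lu(4) True] .
    have "card (V - {l}) < card V" using fin lu(1) by (rule card_Diff1_less)
    then obtain p where p: "\<forall>a b. ?E a b \<longrightarrow> (b \<noteq> r \<and> a = p b) \<or> (a \<noteq> r \<and> b = p a)"
      using less.hyps[OF _ t'] less.prems(2) lu(2) by blast
    have sym: "\<And>a b. E a b \<Longrightarrow> E b a" using sg unfolding simple_graph_def by auto
    show ?thesis
    proof (rule exI[of _ "p(l := u)"], intro allI impI)
      fix a b assume e: "E a b"
      show "(b \<noteq> r \<and> a = (p(l := u)) b) \<or> (a \<noteq> r \<and> b = (p(l := u)) a)"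
      proof (cases "a = l")
        case True
        then have "b = u" using e lu(4) by blast
        then show ?thesis using True lu(2) by simp
      next
        case an: False
        show ?thesis
        proof (cases "b = l")
          case True
          then have "E l a" using sym[OF e] by simp
          then have "a = u" using lu(4) by blast
          then show ?thesis using True lu(2) by simp
        next
          case False
          then have "(b \<noteq> r \<and> a = p b) \<or> (a \<noteq> r \<and> b = p a)" using p e an by blast
          then show ?thesis using False an by simp
        qed
      qed
    qed
  qed
qed

lemma star_case:
  assumes sg: "simple_graph V E" and ac: "acyclic_graph V E" and x: "x \<in> V"
    and cV: "card V = n" and adj: "\<And>v. v \<in> V \<Longrightarrow> v \<noteq> x \<Longrightarrow> E v x"
  shows "is_star V E n"
proof -
  have fin: "finite V" using sg unfolding simple_graph_def by blast
  have inV: "\<And>a b. E a b \<Longrightarrow> a \<in> V \<and> b \<in> V" and sym: "\<And>a b. E a b \<Longrightarrow> E b a"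
    and irr: "\<And>a. \<not> E a a" using sg unfolding simple_graph_def by blast+
  have noe: "a = x \<or> b = x" if e: "E a b" for a b
  proof (rule ccontr)
    assume "\<not> (a = x \<or> b = x)"
    then have ax: "a \<noteq> x" "b \<noteq> x" by auto
    have ab: "a \<noteq> b" using irr e by blast
    have aV: "a \<in> V" and bV: "b \<in> V" using inV[OF e] by auto
    have exa: "E x a" using sym[OF adj[OF aV ax(1)]] .
    have ebx: "E b x" using adj[OF bV ax(2)] .
    have "is_cycle V E [x, a, b]" unfolding is_cycle_def
    proof (intro conjI allI impI)
      show "3 \<le> length [x, a, b]" by simp
      show "distinct [x, a, b]" using ax ab by auto
      show "set [x, a, b] \<subseteq> V" using x aV bV by auto
      show "E (last [x, a, b]) (hd [x, a, b])" using ebx by simp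
      fix i assume "Suc i < length [x, a, b]"
      then have "i = 0 \<or> i = 1" by auto
      then show "E ([x, a, b] ! i) ([x, a, b] ! Suc i)" using exa e by auto
    qed
    then show False using ac unfolding acyclic_graph_def by blast
  qed
  have cx: "card (V - {x}) = card {1..<n}" using cV fin x by simp
  obtain g where g: "bij_betw g (V - {x}) {1..<n}"
    using finite_same_card_bij[OF _ _ cx] fin by auto
  define h where "h = g(x := 0)"
  have hx: "h x = 0" unfolding h_def by simp
  have hv: "v \<in> V \<Longrightarrow> v \<noteq> x \<Longrightarrow> h v = g v \<and> g v \<in> {1..<n}" for v
    using g unfolding h_def bij_betw_def by auto
  have h0: "u \<in> V \<Longrightarrow> h u = 0 \<longleftrightarrow> u = x" for u
    using hv[of u] hx by (cases "u = x") auto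
  have inj: "inj_on h V"
  proof (rule inj_onI)
    fix u v assume u: "u \<in> V" and v: "v \<in> V" and huv: "h u = h v"
    show "u = v"
    proof (cases "u = x \<or> v = x")
      case True then show ?thesis using h0 u v huv by metis
    next
      case False
      then have "g u = g v" using hv[OF u] hv[OF v] huv by auto
      then show ?thesis using g False u v unfolding bij_betw_def inj_on_def by blast
    qed
  qed
  have "h ` (V - {x}) = g ` (V - {x})" using hv by (auto simp: image_def)
  then have "h ` (V - {x}) = {1..<n}" using g unfolding bij_betw_def by simp
  moreover have "V = insert x (V - {x})" using x by blast
  ultimately have "h ` V = insert 0 {1..<n}" using hx by (metis image_insert)
  also have "\<dots> = {0..<n}" using cV x fin card_gt_0_iff by fastforce
  finally have bij: "bij_betw h V {0..<n}" using inj unfolding bij_betw_def by simp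
  have "E u v \<longleftrightarrow> star_edges (h u) (h v)" if u: "u \<in> V" and v: "v \<in> V" for u v
  proof
    assume e: "E u v"
    have "u \<noteq> v" using irr e by blast
    then have "h u \<noteq> h v" using inj u v unfolding inj_on_def by blast
    moreover have "h u = 0 \<or> h v = 0" using noe[OF e] hx by auto
    ultimately show "star_edges (h u) (h v)" unfolding star_edges_def by blast
  next
    assume s: "star_edges (h u) (h v)"
    then have "h u \<noteq> h v" "h u = 0 \<or> h v = 0" unfolding star_edges_def by auto
    then have "u \<noteq> v" "u = x \<or> v = x" using h0 u v by auto
    then show "E u v" using adj u v sym by blast
  qed
  then show ?thesis unfolding is_star_def graph_iso_def using bij by blast
qed

lemma main_bound:
  assumes t: "is_tree V E" and cV: "card V = n" and n2: "n \<ge> 2"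
    and ns: "\<not> is_star V E n" and f: "rdrd_fun V E f"
  shows "weight V f \<ge> n + 2"
proof -
  have sg: "simple_graph V E" and ac: "acyclic_graph V E" using t unfolding is_tree_def by auto
  have fin: "finite V" using sg unfolding simple_graph_def by blast
  have inV: "\<And>a b. E a b \<Longrightarrow> a \<in> V \<and> b \<in> V" and sym: "\<And>a b. E a b \<Longrightarrow> E b a"
    and irr: "\<And>a. \<not> E a a" using sg unfolding simple_graph_def by blast+
  have le3: "\<And>v. v \<in> V \<Longrightarrow> f v \<le> 3" using f unfolding rdrd_fun_def by blast
  have c0: "\<And>v. v\<in>V \<Longrightarrow> f v = 0 \<Longrightarrow> 2 \<le> card {w. E v w \<and> f w = 2} \<or> (\<exists>w. E v w \<and> f w = 3)"
    using f unfolding rdrd_fun_def by blast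
  have c1: "\<And>v. v\<in>V \<Longrightarrow> f v = 1 \<Longrightarrow> \<exists>w. E v w \<and> (f w = 2 \<or> f w = 3)"
    using f unfolding rdrd_fun_def by blast
  have c2: "\<And>v. v\<in>V \<Longrightarrow> f v = 0 \<Longrightarrow> \<exists>w. E v w \<and> f w = 0"
    using f unfolding rdrd_fun_def by blast
  define w where "w v = f v - 1" for v
  define V0 where "V0 = {v\<in>V. f v = 0}"
  define V23 where "V23 = {v\<in>V. 2 \<le> f v}"
  have fV0: "finite V0" and fV23: "finite V23" using fin unfolding V0_def V23_def by auto
  have A: "(\<Sum>v\<in>V. if f v = 0 then 1 else 0) = card V0"
    unfolding V0_def using sum.inter_filter[OF fin, of "\<lambda>_. 1::nat" "\<lambda>v. f v = 0"] by simp
  have B: "(\<Sum>v\<in>V. if 2 \<le> f v then w v else 0) = (\<Sum>v\<in>V23. w v)"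
    unfolding V23_def using sum.inter_filter[OF fin, of w "\<lambda>v. 2 \<le> f v"] by simp
  have C: "(\<Sum>v\<in>V. f v + (if f v = 0 then 1 else 0)) = (\<Sum>v\<in>V. 1 + (if 2 \<le> f v then w v else 0))"
    by (rule sum.cong) (auto simp: w_def)
  have D: "(\<Sum>v\<in>V. 1 + (if 2 \<le> f v then w v else 0)) = card V + (\<Sum>v\<in>V. if 2 \<le> f v then w v else 0)"
    using sum.distrib[of "\<lambda>_. 1::nat" "\<lambda>v. if 2 \<le> f v then w v else 0" V] by simp
  have E: "(\<Sum>v\<in>V. f v + (if f v = 0 then 1 else 0)) = weight V f + (\<Sum>v\<in>V. if f v = 0 then 1 else 0)"
    unfolding weight_def by (rule sum.distrib)
  have wid: "weight V f + card V0 = n + (\<Sum>v\<in>V23. w v)"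
    using C D E A B cV by linarith
  have key: "card V0 + 2 \<le> (\<Sum>v\<in>V23. w v)"
  proof (cases "V0 = {}")
    case True
    show ?thesis
    proof (rule ccontr)
      assume "\<not> ?thesis"
      then have s1: "(\<Sum>v\<in>V23. w v) \<le> 1" using True by simp
      have w1: "\<And>v. v \<in> V23 \<Longrightarrow> 1 \<le> w v" unfolding V23_def w_def by auto
      have "card V23 \<le> (\<Sum>v\<in>V23. w v)"
        using sum_mono[of V23 "\<lambda>_. 1::nat" w] w1 by simp
      then have cV23: "card V23 \<le> 1" using s1 by simp
      have f2: "f v = 2" if v: "v \<in> V23" for v
      proof -
        have "w v \<le> (\<Sum>v\<in>V23. w v)" by (rule member_le_sum[OF v _ fV23]) simp
        then have "w v \<le> 1" using s1 by simp
        then show ?thesis using v le3 unfolding V23_def w_def by auto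
      qed
      obtain v0 where v0: "v0 \<in> V" using t unfolding is_tree_def by blast
      have "V23 \<noteq> {}"
      proof (cases "2 \<le> f v0")
        case True
        then have "v0 \<in> V23" using v0 unfolding V23_def by simp
        then show ?thesis by blast
      next
        case False
        have "f v0 \<noteq> 0" using v0 \<open>V0 = {}\<close> unfolding V0_def by auto
        then have "f v0 = 1" using False by simp
        then obtain u where "E v0 u" "f u = 2 \<or> f u = 3" using c1 v0 by blast
        then have "u \<in> V23" using inV unfolding V23_def by fastforce
        then show ?thesis by blast
      qed
      then obtain x where x: "V23 = {x}" using cV23 fV23
        by (metis card_0_eq card_1_singletonE le_antisym less_one not_le)
      have xV: "x \<in> V" using x unfolding V23_def by blast
      have "E v x" if v: "v \<in> V" "v \<noteq> x" for v
      proof -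
        have "f v \<noteq> 0" using v \<open>V0 = {}\<close> unfolding V0_def by auto
        moreover have "\<not> 2 \<le> f v" using v x unfolding V23_def by blast
        ultimately have "f v = 1" by simp
        then obtain u where u: "E v u" "f u = 2 \<or> f u = 3" using c1 v by blast
        then have "u \<in> V23" using inV unfolding V23_def by fastforce
        then show ?thesis using u x by simp
      qed
      then have "is_star V E n" using star_case[OF sg ac xV cV] by blast
      then show False using ns by simp
    qed
  next
    case False
    then obtain r where r: "r \<in> V0" by blast
    have rV: "r \<in> V" using r unfolding V0_def by simp
    obtain p where p: "\<And>u v. E u v \<Longrightarrow> (v \<noteq> r \<and> u = p v) \<or> (u \<noteq> r \<and> v = p u)"
      using tree_root[OF t rV] by blast
    define d where "d x = card {v\<in>V0. E v x}" for x
    define Cx where "Cx x = {c\<in>V0. E c x \<and> c \<noteq> r \<and> p c = x}" for x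
    define T0 where "T0 = {t\<in>V0. t \<noteq> r \<and> p t \<notin> V0}"
    have fT0: "finite T0" using fV0 unfolding T0_def by simp
    have fC: "\<And>x. finite (Cx x)" using fV0 unfolding Cx_def by simp
    have s1: "2 \<le> (\<Sum>x\<in>{x\<in>V23. E v x}. w x)" if v: "v \<in> V0" for v
    proof -
      have vV: "v \<in> V" "f v = 0" using v unfolding V0_def by auto
      have fN: "finite {x\<in>V23. E v x}" using fV23 by simp
      from c0[OF vV] show ?thesis
      proof
        assume 2: "2 \<le> card {u. E v u \<and> f u = 2}"
        have sub: "{u. E v u \<and> f u = 2} \<subseteq> {x\<in>V23. E v x}" using inV unfolding V23_def by fastforce
        have "(\<Sum>x\<in>{u. E v u \<and> f u = 2}. w x) = card {u. E v u \<and> f u = 2}"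
          unfolding w_def by simp
        moreover have "(\<Sum>x\<in>{u. E v u \<and> f u = 2}. w x) \<le> (\<Sum>x\<in>{x\<in>V23. E v x}. w x)"
          by (rule sum_mono2[OF fN sub]) simp
        ultimately show ?thesis using 2 by simp
      next
        assume "\<exists>u. E v u \<and> f u = 3"
        then obtain u where u: "E v u" "f u = 3" by blast
        then have uN: "u \<in> {x\<in>V23. E v x}" using inV unfolding V23_def by fastforce
        have "w u \<le> (\<Sum>x\<in>{x\<in>V23. E v x}. w x)" by (rule member_le_sum[OF uN _ fN]) simp
        then show ?thesis using u unfolding w_def by simp
      qed
    qed
    have s2: "2 * card V0 \<le> (\<Sum>v\<in>V0. \<Sum>x\<in>{x\<in>V23. E v x}. w x)"
      using sum_mono[of V0 "\<lambda>_. 2::nat" "\<lambda>v. \<Sum>x\<in>{x\<in>V23. E v x}. w x"] s1 by simp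
    have s3: "(\<Sum>v\<in>V0. \<Sum>x\<in>{x\<in>V23. E v x}. w x) = (\<Sum>x\<in>V23. w x * d x)"
    proof -
      have "(\<Sum>v\<in>V0. \<Sum>x\<in>{x\<in>V23. E v x}. w x) = (\<Sum>x\<in>V23. \<Sum>v\<in>{v\<in>V0. E v x}. w x)"
        by (rule sum.swap_restrict[OF fV0 fV23])
      also have "\<dots> = (\<Sum>x\<in>V23. w x * d x)" unfolding d_def by (simp add: mult.commute)
      finally show ?thesis .
    qed
    have s4: "w x * d x \<le> w x + 2 * (d x - 1)" if x: "x \<in> V23" for x
    proof (cases "d x")
      case 0 then show ?thesis by simp
    next
      case (Suc k)
      have "w x \<le> 2" using x le3 unfolding V23_def w_def by fastforce
      then have "w x * k \<le> 2 * k" by simp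
      then show ?thesis using Suc by simp
    qed
    have s5: "d x - 1 \<le> card (Cx x)" if x: "x \<in> V23" for x
    proof -
      have "{v\<in>V0. E v x} \<subseteq> insert (p x) (Cx x)"
      proof
        fix v assume v: "v \<in> {v\<in>V0. E v x}"
        then have "(x \<noteq> r \<and> v = p x) \<or> (v \<noteq> r \<and> x = p v)" using p by blast
        then show "v \<in> insert (p x) (Cx x)" using v unfolding Cx_def by auto
      qed
      then have "d x \<le> card (insert (p x) (Cx x))" unfolding d_def
        by (rule card_mono[rotated]) (simp add: fC)
      also have "\<dots> \<le> Suc (card (Cx x))" using fC by (simp add: card_insert_if)
      finally show ?thesis by simp
    qed
    have s6: "(\<Sum>x\<in>V23. card (Cx x)) \<le> card T0"
    proof -
      have "(\<Sum>x\<in>V23. card (Cx x)) = card (\<Union>(Cx ` V23))"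
        by (rule card_UN_disjoint[symmetric, OF fV23]) (auto simp: fC[unfolded Cx_def] Cx_def)
      also have "\<dots> \<le> card T0"
      proof (rule card_mono[OF fT0])
        show "\<Union>(Cx ` V23) \<subseteq> T0"
          unfolding Cx_def T0_def V23_def V0_def by auto
      qed
      finally show ?thesis .
    qed
    have s7: "2 * card T0 + 2 \<le> card V0"
    proof -
      have chex: "\<exists>c. c \<in> V0 \<and> c \<noteq> r \<and> p c = t" if t: "t \<in> T0" for t
      proof -
        have tV: "t \<in> V" "f t = 0" using t unfolding T0_def V0_def by auto
        obtain c where c: "E t c" "f c = 0" using c2[OF tV] by blast
        have cV0: "c \<in> V0" using c inV unfolding V0_def by blast
        have "(c \<noteq> r \<and> t = p c) \<or> (t \<noteq> r \<and> c = p t)" using p[OF c(1)] .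
        moreover have "p t \<notin> V0" using t unfolding T0_def by blast
        ultimately show ?thesis using cV0 by auto
      qed
      define ch where "ch t = (SOME c. c \<in> V0 \<and> c \<noteq> r \<and> p c = t)" for t
      have chp: "ch t \<in> V0 \<and> ch t \<noteq> r \<and> p (ch t) = t" if "t \<in> T0" for t
        unfolding ch_def using someI_ex[OF chex[OF that]] .
      have fr: "f r = 0" using r unfolding V0_def by simp
      obtain q where q: "E r q" "f q = 0" using c2[OF rV fr] by auto
      have qV0: "q \<in> V0" using q inV unfolding V0_def by blast
      have qr: "q \<noteq> r" "p q = r" using p[OF q(1)] by auto
      have inj: "inj_on ch T0" by (rule inj_on_inverseI[of _ p]) (use chp in blast)
      have d1: "T0 \<inter> ch ` T0 = {}"
        using chp unfolding T0_def by fastforce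
      have d2: "(T0 \<union> ch ` T0) \<inter> {r, q} = {}"
        using chp qr r unfolding T0_def by fastforce
      have ceq: "card (T0 \<union> ch ` T0 \<union> {r, q}) = card T0 + card T0 + 2"
        using card_Un_disjoint[OF _ _ d2] card_Un_disjoint[OF fT0 _ d1] fT0 card_image[OF inj] qr
        by simp
      have "T0 \<union> ch ` T0 \<union> {r, q} \<subseteq> V0" using chp r qV0 unfolding T0_def by auto
      then have "card (T0 \<union> ch ` T0 \<union> {r, q}) \<le> card V0" by (rule card_mono[OF fV0])
      then show ?thesis using ceq by linarith
    qed
    have "2 * card V0 \<le> (\<Sum>x\<in>V23. w x * d x)" using s2 s3 by simp
    also have "\<dots> \<le> (\<Sum>x\<in>V23. w x + 2 * (d x - 1))" by (rule sum_mono) (rule s4)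
    also have "\<dots> = (\<Sum>x\<in>V23. w x) + 2 * (\<Sum>x\<in>V23. d x - 1)"
      by (simp add: sum.distrib sum_distrib_left)
    finally have z1: "2 * card V0 \<le> (\<Sum>x\<in>V23. w x) + 2 * (\<Sum>x\<in>V23. d x - 1)" .
    have "(\<Sum>x\<in>V23. d x - 1) \<le> (\<Sum>x\<in>V23. card (Cx x))" by (rule sum_mono) (rule s5)
    then have "2 * card V0 \<le> (\<Sum>x\<in>V23. w x) + 2 * card T0" using z1 s6 by linarith
    then show ?thesis using s7 by linarith
  qed
  show ?thesis using wid key by linarith
qed

theorem theorem3p1:
  fixes V :: "'a set" and E :: "'a \<Rightarrow> 'a \<Rightarrow> bool" and n :: nat
  assumes "is_tree V E"
    and "card V = n"
    and "n \<ge> 2"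
    and "\<not> is_star V E n"
  shows "gamma_rdR V E \<ge> n + 2"
proof -
  let ?S = "{weight V f | f. rdrd_fun V E f}"
  have fin: "finite V" using assms(1) unfolding is_tree_def simple_graph_def by blast
  have "?S \<subseteq> {..3 * card V}"
  proof
    fix s assume "s \<in> ?S"
    then obtain f where s: "s = weight V f" and f: "rdrd_fun V E f" by blast
    have "\<forall>v\<in>V. f v \<le> 3" using f unfolding rdrd_fun_def by blast
    then have "(\<Sum>v\<in>V. f v) \<le> (\<Sum>v\<in>V. 3)" by (intro sum_mono) simp
    then show "s \<in> {..3 * card V}" using s unfolding weight_def by simp
  qed
  then have finS: "finite ?S" using finite_subset by blast
  have "rdrd_fun V E (\<lambda>_. 3)" unfolding rdrd_fun_def by simp
  then have neS: "?S \<noteq> {}" by blast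
  have "\<forall>a\<in>?S. n + 2 \<le> a" using main_bound[OF assms] by blast
  then show ?thesis unfolding gamma_rdR_def using Min_ge_iff[OF finS neS] by blast
qed

end
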